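(* Let $G$ be an embedded graph and let $\tilde G$ be the embedded graph obtained by subdividing every edge $e$ of $G$ exactly once by a new vertex $\tilde e$, placed on the curve of $e$ between one endpoint of $e$ and the first crossing point of $e$ in that direction (so that the resulting edge from that endpoint to $\tilde e$ is uncrossed); let $D(\tilde G)=\{\tilde e: e\in E(G)\}$. If $(A,X,B)$ is a co-separating triple of $(\Lambda(\tilde G),\tilde G)$ with $X\cap V(\tilde G)\subseteq D(\tilde G)$, then the set $\{e\in E(G):\tilde e\in X\}$ is an edge cut of $G$ (its removal disconnects $G$).
   Context: Graphs may have parallel edges. A drawing of a graph $G$ maps the vertices to distinct points of the plane and each edge to a curve (a homeomorphic image of $[0,1]$) joining the images of its endpoints whose interior contains no vertex. A crossing is a point interior to two distinct edges; no third edge passes through it, and the two edges cross transversally there. An embedded graph is a graph together with such a drawing. Its planarization $H^\times$ is the plane graph obtained by inserting a dummy-vertex at every crossing point; for an edge $e$, $e^\times$ denotes the walk in $H^\times$ from one endpoint of $e$ to the other through the crossing points on $e$ in order, and $V(e^\times)$ its vertex set. $\Lambda(H)$ is obtained from $H^\times$ by inserting inside each face of $H^\times$ a new face-vertex adjacent to all vertices of $H^\times$ on the boundary of that face. A co-separating triple of $(\Lambda(H),H)$ is a partition $(A,X,B)$ of $V(\Lambda(H))$ such that: (C1) each of $A,X,B$ contains at least one vertex of $H$; (C2) no edge of $\Lambda(H)$ has one endpoint in $A$ and the other in $B$; (C3) for every edge $e\in E(H)$, either both endpoints of $e$ lie in $X$, or $V(e^\times)\subseteq A\cup X$, or $V(e^\times)\subseteq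 B\cup X$. *)

theory Defs
  imports "HOL-Analysis.Analysis"
begin

text \<open>Embedded graphs: vertices are identified with their (distinct) images in the plane
  (= complex numbers); each edge e is drawn as an arc g e from pathstart (g e) to pathfinish (g e).\<close>

definition edge_int :: "(real \<Rightarrow> complex) \<Rightarrow> complex set" where
  "edge_int \<gamma> = \<gamma> ` {0<..<1}"

definition transversal_at :: "(real \<Rightarrow> complex) \<Rightarrow> (real \<Rightarrow> complex) \<Rightarrow> complex \<Rightarrow> bool" where
  "transversal_at \<gamma> \<delta> p \<longleftrightarrow>
     (\<exists>U h k. open U \<and> p \<in> U \<and> homeomorphism U (ball 0 1) h k \<and> h p = 0 \<and>
        h ` (path_image \<gamma> \<inter> U) = ball 0 1 \<inter> {z. Im z = 0} \<and>
        h ` (path_image \<delta> \<inter> U) = ball 0 1 \<inter> {z. Re z = 0})"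

definition crossings :: "'e set \<Rightarrow> ('e \<Rightarrow> real \<Rightarrow> complex) \<Rightarrow> complex set" where
  "crossings E g = {p. \<exists>e\<in>E. \<exists>f\<in>E. e \<noteq> f \<and> p \<in> edge_int (g e) \<and> p \<in> edge_int (g f)}"

definition embedded_graph :: "complex set \<Rightarrow> 'e set \<Rightarrow> ('e \<Rightarrow> real \<Rightarrow> complex) \<Rightarrow> bool" where
  "embedded_graph V E g \<longleftrightarrow>
     finite V \<and> finite E \<and>
     (\<forall>e\<in>E. arc (g e) \<and> pathstart (g e) \<in> V \<and> pathfinish (g e) \<in> V \<and> edge_int (g e) \<inter> V = {}) \<and>
     finite (crossings E g) \<and>
     (\<forall>e\<in>E. \<forall>f\<in>E. \<forall>p. e \<noteq> f \<and> p \<in> edge_int (g e) \<and> p \<in> edge_int (g f) \<longrightarrow>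
        transversal_at (g e) (g f) p \<and> (\<forall>h\<in>E. p \<in> edge_int (g h) \<longrightarrow> h = e \<or> h = f))"

definition planar_vertices :: "complex set \<Rightarrow> 'e set \<Rightarrow> ('e \<Rightarrow> real \<Rightarrow> complex) \<Rightarrow> complex set" where
  "planar_vertices V E g = V \<union> crossings E g"

definition planar_adj :: "complex set \<Rightarrow> 'e set \<Rightarrow> ('e \<Rightarrow> real \<Rightarrow> complex) \<Rightarrow> complex \<Rightarrow> complex \<Rightarrow> bool" where
  "planar_adj V E g p q \<longleftrightarrow>
     (\<exists>e\<in>E. \<exists>s t. 0 \<le> s \<and> s < t \<and> t \<le> 1 \<and> {p, q} = {g e s, g e t} \<and>
        g e s \<in> planar_vertices V E g \<and> g e t \<in> planar_vertices V E g \<and>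
        (\<forall>r. s < r \<and> r < t \<longrightarrow> g e r \<notin> planar_vertices V E g))"

definition drawing :: "'e set \<Rightarrow> ('e \<Rightarrow> real \<Rightarrow> complex) \<Rightarrow> complex set" where
  "drawing E g = (\<Union>e\<in>E. path_image (g e))"

definition faces :: "'e set \<Rightarrow> ('e \<Rightarrow> real \<Rightarrow> complex) \<Rightarrow> complex set set" where
  "faces E g = components (- drawing E g)"

datatype lvert = PtV complex | FaceV "complex set"

definition lam_vertices :: "complex set \<Rightarrow> 'e set \<Rightarrow> ('e \<Rightarrow> real \<Rightarrow> complex) \<Rightarrow> lvert set" where
  "lam_vertices V E g = PtV ` planar_vertices V E g \<union> FaceV ` faces E g"

definition lam_adj :: "complex set \<Rightarrow> 'e set \<Rightarrow> ('e \<Rightarrow> real \<Rightarrow> complex) \<Rightarrow> lvert \<Rightarrow> lvert \<Rightarrow> bool" where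
  "lam_adj V E g x y \<longleftrightarrow>
     (\<exists>p q. x = PtV p \<and> y = PtV q \<and> planar_adj V E g p q) \<or>
     (\<exists>F p. F \<in> faces E g \<and> p \<in> planar_vertices V E g \<and> p \<in> frontier F \<and>
        {x, y} = {FaceV F, PtV p})"

definition walk_vertices :: "complex set \<Rightarrow> 'e set \<Rightarrow> ('e \<Rightarrow> real \<Rightarrow> complex) \<Rightarrow> 'e \<Rightarrow> complex set" where
  "walk_vertices V E g e = planar_vertices V E g \<inter> path_image (g e)"

definition co_separating ::
  "complex set \<Rightarrow> 'e set \<Rightarrow> ('e \<Rightarrow> real \<Rightarrow> complex) \<Rightarrow> lvert set \<Rightarrow> lvert set \<Rightarrow> lvert set \<Rightarrow> bool" where
  "co_separating V E g A X B \<longleftrightarrow>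
     A \<inter> X = {} \<and> A \<inter> B = {} \<and> X \<inter> B = {} \<and> A \<union> X \<union> B = lam_vertices V E g \<and>
     A \<inter> PtV ` V \<noteq> {} \<and> X \<inter> PtV ` V \<noteq> {} \<and> B \<inter> PtV ` V \<noteq> {} \<and>
     (\<forall>x y. lam_adj V E g x y \<longrightarrow> \<not> (x \<in> A \<and> y \<in> B) \<and> \<not> (x \<in> B \<and> y \<in> A)) \<and>
     (\<forall>e\<in>E. (PtV (pathstart (g e)) \<in> X \<and> PtV (pathfinish (g e)) \<in> X) \<or>
             PtV ` walk_vertices V E g e \<subseteq> A \<union> X \<or>
             PtV ` walk_vertices V E g e \<subseteq> B \<union> X)"

definition valid_subdivision :: "'e set \<Rightarrow> ('e \<Rightarrow> real \<Rightarrow> complex) \<Rightarrow> ('e \<Rightarrow> real) \<Rightarrow> bool" where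
  "valid_subdivision E g t \<longleftrightarrow>
     (\<forall>e\<in>E. 0 < t e \<and> t e < 1 \<and>
        (g e ` {0..t e} \<inter> crossings E g = {} \<or> g e ` {t e..1} \<inter> crossings E g = {}))"

definition sub_vertices :: "complex set \<Rightarrow> 'e set \<Rightarrow> ('e \<Rightarrow> real \<Rightarrow> complex) \<Rightarrow> ('e \<Rightarrow> real) \<Rightarrow> complex set" where
  "sub_vertices V E g t = V \<union> (\<lambda>e. g e (t e)) ` E"

definition sub_edges :: "'e set \<Rightarrow> ('e \<times> bool) set" where
  "sub_edges E = E \<times> UNIV"

definition sub_curves :: "('e \<Rightarrow> real \<Rightarrow> complex) \<Rightarrow> ('e \<Rightarrow> real) \<Rightarrow> 'e \<times> bool \<Rightarrow> real \<Rightarrow> complex" where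
  "sub_curves g t = (\<lambda>(e, b). if b then subpath 0 (t e) (g e) else subpath (t e) 1 (g e))"

definition edge_cut :: "complex set \<Rightarrow> 'e set \<Rightarrow> ('e \<Rightarrow> real \<Rightarrow> complex) \<Rightarrow> 'e set \<Rightarrow> bool" where
  "edge_cut V E g F \<longleftrightarrow> F \<subseteq> E \<and>
     (\<exists>u\<in>V. \<exists>v\<in>V. \<not> (\<lambda>x y. \<exists>e\<in>E - F. {x, y} = {pathstart (g e), pathfinish (g e)})\<^sup>*\<^sup>* u v)"

end

theory Submission
  imports Defs
begin

theorem mainTheorem6:
  fixes V :: "complex set" and E :: "'e set" and g :: "'e \<Rightarrow> real \<Rightarrow> complex"
    and t :: "'e \<Rightarrow> real" and A X B :: "lvert set"
  assumes "embedded_graph V E g"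
    and "valid_subdivision E g t"
    and "co_separating (sub_vertices V E g t) (sub_edges E) (sub_curves g t) A X B"
    and "X \<inter> PtV ` sub_vertices V E g t \<subseteq> PtV ` ((\<lambda>e. g e (t e)) ` E)"
  shows "edge_cut V E g {e \<in> E. PtV (g e (t e)) \<in> X}"
proof -
  let ?F = "{e \<in> E. PtV (g e (t e)) \<in> X}"
  let ?V' = "sub_vertices V E g t"
  let ?E' = "sub_edges E"
  let ?g' = "sub_curves g t"
  note emb = assms(1)[unfolded embedded_graph_def]
  note vs = assms(2)[unfolded valid_subdivision_def]
  note cs = assms(3)[unfolded co_separating_def]
  have disj: "A \<inter> X = {}" "A \<inter> B = {}" "X \<inter> B = {}" and cov: "A \<union> X \<union> B = lam_vertices ?V' ?E' ?g'"
    using cs by auto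
  have c3: "\<And>e'. e' \<in> ?E' \<Longrightarrow> (PtV (pathstart (?g' e')) \<in> X \<and> PtV (pathfinish (?g' e')) \<in> X) \<or>
             PtV ` walk_vertices ?V' ?E' ?g' e' \<subseteq> A \<union> X \<or>
             PtV ` walk_vertices ?V' ?E' ?g' e' \<subseteq> B \<union> X"
    using cs by blast
  have inlam: "\<And>v. v \<in> ?V' \<Longrightarrow> PtV v \<in> lam_vertices ?V' ?E' ?g'"
    unfolding lam_vertices_def planar_vertices_def by blast
  have notX: "\<And>v. v \<in> V \<Longrightarrow> PtV v \<notin> X"
  proof
    fix v assume v: "v \<in> V" "PtV v \<in> X"
    then have "PtV v \<in> X \<inter> PtV ` ?V'" unfolding sub_vertices_def by blast
    with assms(4) obtain e where e: "e \<in> E" "v = g e (t e)" by auto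
    have "v \<in> edge_int (g e)" using e vs unfolding edge_int_def by auto
    with emb e v show False by blast
  qed
  have sides: "(PtV (pathstart (g e)) \<in> A \<and> PtV (pathfinish (g e)) \<in> A \<and> PtV (g e (t e)) \<in> A) \<or>
               (PtV (pathstart (g e)) \<in> B \<and> PtV (pathfinish (g e)) \<in> B \<and> PtV (g e (t e)) \<in> B)"
    if e: "e \<in> E" "e \<notin> ?F" for e
  proof -
    let ?d = "g e (t e)"
    have dX: "PtV ?d \<notin> X" using e by auto
    have dV: "?d \<in> ?V'" using e unfolding sub_vertices_def by auto
    have sV: "pathstart (g e) \<in> ?V'" "pathfinish (g e) \<in> ?V'"
      using emb e unfolding sub_vertices_def by auto
    have sX: "PtV (pathstart (g e)) \<notin> X" "PtV (pathfinish (g e)) \<notin> X"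
      using emb e notX by auto
    have dAB: "PtV ?d \<in> A \<or> PtV ?d \<in> B" using inlam[OF dV] cov dX by blast
    have t1: "(e, True) \<in> ?E'" and t2: "(e, False) \<in> ?E'" unfolding sub_edges_def using e by auto
    have g1: "?g' (e, True) = subpath 0 (t e) (g e)" and g2: "?g' (e, False) = subpath (t e) 1 (g e)"
      unfolding sub_curves_def by auto
    have ps1: "pathstart (?g' (e, True)) = pathstart (g e)" "pathfinish (?g' (e, True)) = ?d"
      unfolding g1 by (auto simp: pathstart_def pathfinish_def subpath_def)
    have ps2: "pathstart (?g' (e, False)) = ?d" "pathfinish (?g' (e, False)) = pathfinish (g e)"
      unfolding g2 by (auto simp: pathstart_def pathfinish_def subpath_def)
    have w1: "pathstart (g e) \<in> walk_vertices ?V' ?E' ?g' (e, True)" "?d \<in> walk_vertices ?V' ?E' ?g' (e, True)"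
      unfolding walk_vertices_def planar_vertices_def using sV dV
      by (metis Int_iff Un_iff pathfinish_in_path_image pathstart_in_path_image ps1)+
    have w2: "pathfinish (g e) \<in> walk_vertices ?V' ?E' ?g' (e, False)" "?d \<in> walk_vertices ?V' ?E' ?g' (e, False)"
      unfolding walk_vertices_def planar_vertices_def using sV dV
      by (metis Int_iff Un_iff pathfinish_in_path_image pathstart_in_path_image ps2)+
    from c3[OF t1] have h1: "PtV ` walk_vertices ?V' ?E' ?g' (e, True) \<subseteq> A \<union> X \<or>
             PtV ` walk_vertices ?V' ?E' ?g' (e, True) \<subseteq> B \<union> X" using ps1 dX by auto
    from c3[OF t2] have h2: "PtV ` walk_vertices ?V' ?E' ?g' (e, False) \<subseteq> A \<union> X \<or>
             PtV ` walk_vertices ?V' ?E' ?g' (e, False) \<subseteq> B \<union> X" using ps2 dX by auto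
    show ?thesis
    proof (cases "PtV ?d \<in> A")
      case True
      then have "PtV ?d \<notin> B \<and> PtV ?d \<notin> X" using disj by blast
      then show ?thesis using h1 h2 w1 w2 sX by blast
    next
      case False
      then have "PtV ?d \<in> B" "PtV ?d \<notin> A \<and> PtV ?d \<notin> X" using dAB dX by auto
      then show ?thesis using h1 h2 w1 w2 sX by blast
    qed
  qed
  have pick: "\<exists>u\<in>V. PtV u \<in> S" if S: "S = A \<or> S = B" "S \<inter> PtV ` ?V' \<noteq> {}" for S
  proof -
    obtain w where w: "w \<in> ?V'" "PtV w \<in> S" using S(2) by auto
    show ?thesis
    proof (cases "w \<in> V")
      case True then show ?thesis using w by blast
    next
      case False
      then obtain e where e: "e \<in> E" "w = g e (t e)" using w unfolding sub_vertices_def by auto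
      have "PtV w \<notin> X" using S(1) w(2) disj by blast
      then have eF: "e \<notin> ?F" using e by auto
      have wS: "PtV (g e (t e)) \<in> S" using w(2) e(2) by simp
      from sides[OF e(1) eF] have "PtV (pathstart (g e)) \<in> S"
      proof
        assume h: "PtV (pathstart (g e)) \<in> A \<and> PtV (pathfinish (g e)) \<in> A \<and> PtV (g e (t e)) \<in> A"
        show ?thesis
        proof (cases "S = A")
          case True then show ?thesis using h by simp
        next
          case False then have "S = B" using S(1) by simp
          then have False using wS h disj(2) by blast
          then show ?thesis ..
        qed
      next
        assume h: "PtV (pathstart (g e)) \<in> B \<and> PtV (pathfinish (g e)) \<in> B \<and> PtV (g e (t e)) \<in> B"
        show ?thesis
        proof (cases "S = B")
          case True then show ?thesis using h by simp
        next
          case False then have "S = A" using S(1) by simp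
          then have False using wS h disj(2) by blast
          then show ?thesis ..
        qed
      qed
      moreover have "pathstart (g e) \<in> V" using emb e by auto
      ultimately show ?thesis by blast
    qed
  qed
  obtain u where u: "u \<in> V" "PtV u \<in> A" using pick[of A] cs by blast
  obtain v where v: "v \<in> V" "PtV v \<in> B" using pick[of B] cs by blast
  have reach: "PtV y \<in> A" if "(\<lambda>x y. \<exists>e\<in>E - ?F. {x, y} = {pathstart (g e), pathfinish (g e)})\<^sup>*\<^sup>* u y" for y
    using that
  proof (induction rule: rtranclp_induct)
    case base then show ?case using u by simp
  next
    case (step y z)
    then obtain e where e: "e \<in> E" "e \<notin> ?F" "{y, z} = {pathstart (g e), pathfinish (g e)}" by auto
    from sides[OF e(1,2)] show ?case
    proof
      assume h: "PtV (pathstart (g e)) \<in> A \<and> PtV (pathfinish (g e)) \<in> A \<and> PtV (g e (t e)) \<in> A"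
      then show ?case using e(3) by (auto simp: doubleton_eq_iff)
    next
      assume h: "PtV (pathstart (g e)) \<in> B \<and> PtV (pathfinish (g e)) \<in> B \<and> PtV (g e (t e)) \<in> B"
      then have "PtV y \<in> B" using e(3) by (auto simp: doubleton_eq_iff)
      then show ?case using step.IH disj(2) by blast
    qed
  qed
  show ?thesis unfolding edge_cut_def
  proof (intro conjI)
    show "?F \<subseteq> E" by auto
    show "\<exists>u\<in>V. \<exists>v\<in>V. \<not> (\<lambda>x y. \<exists>e\<in>E - ?F. {x, y} = {pathstart (g e), pathfinish (g e)})\<^sup>*\<^sup>* u v"
    proof (intro bexI)
      show "\<not> (\<lambda>x y. \<exists>e\<in>E - ?F. {x, y} = {pathstart (g e), pathfinish (g e)})\<^sup>*\<^sup>* u v"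
      proof
        assume "(\<lambda>x y. \<exists>e\<in>E - ?F. {x, y} = {pathstart (g e), pathfinish (g e)})\<^sup>*\<^sup>* u v"
        from reach[OF this] v(2) disj(2) show False by blast
      qed
    qed (use u v in auto)
  qed
qed

end
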